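(* Let $d$ be even, let $n>2d$ be prime, let $\omega=e^{2\pi i/n}$, and let $T$ be a $d\times d$ Cauchy matrix over $\mathbb{F}_n$. Define the $n^d\times n^d$ complex matrix $W_T$ by $(W_T)_{(i_1,\dots,i_d),(j_1,\dots,j_d)}=\omega^{(i_1,\dots,i_d)\,T\,(j_1,\dots,j_d)^{\top}}$ (the exponent computed in $\mathbb{F}_n$). Then for every $\kappa\subseteq[d]$, the matrix $W_T^{\top_\kappa}$ has rank $n^d$.
   Context: A Cauchy matrix over $\mathbb{F}_n$ is $T_{ab}=1/(x_a-y_b)$ for pairwise distinct elements $x_1,\dots,x_d,y_1,\dots,y_d\in\mathbb{F}_n$; every square submatrix of it is nonsingular. Indices $i_k,j_k\in[n]$ are regarded as elements of $\mathbb{F}_n$. For $k\in[d]$, $M^{\top_k}_{(i_1,\dots,i_d),(j_1,\dots,j_d)}=M_{(\dots,i_{k-1},j_k,i_{k+1},\dots),(\dots,j_{k-1},i_k,j_{k+1},\dots)}$ and $M^{\top_\kappa}$ composes these over $k\in\kappa$. *)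

theory Defs
  imports Complex_Main "Jordan_Normal_Form.DL_Rank"
begin

text \<open>Elements of F_n are represented by integers modulo the prime n.
  A d x d Cauchy matrix over F_n (rows/columns indexed by 0..d-1):
  there are pairwise distinct residues x_0..x_{d-1}, y_0..y_{d-1} mod n with
  T a b * (x a - y b) = 1 (mod n), i.e. T a b = 1/(x a - y b) in F_n.\<close>
definition cauchy_mod :: "nat \<Rightarrow> nat \<Rightarrow> (nat \<Rightarrow> nat \<Rightarrow> int) \<Rightarrow> bool" where
  "cauchy_mod n d T \<longleftrightarrow>
     (\<exists>x y :: nat \<Rightarrow> int.
        (\<forall>a<d. x a \<in> {0..<int n} \<and> y a \<in> {0..<int n}) \<and>
        inj_on x {0..<d} \<and> inj_on y {0..<d} \<and>
        (\<forall>a<d. \<forall>b<d. x a \<noteq> y b) \<and>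
        (\<forall>a<d. \<forall>b<d. (T a b * (x a - y b)) mod int n = 1 mod int n))"

text \<open>Multi-indices (i_1,...,i_d) in [n]^d (with [n] = {0,...,n-1}) are encoded
  as the number sum_k i_k n^k; digit n k a is the k-th coordinate (0-based).\<close>
definition digit :: "nat \<Rightarrow> nat \<Rightarrow> nat \<Rightarrow> nat" where
  "digit n k a = a div n ^ k mod n"

definition tup_enc :: "nat \<Rightarrow> nat \<Rightarrow> (nat \<Rightarrow> nat) \<Rightarrow> nat" where
  "tup_enc n d f = (\<Sum>k<d. f k * n ^ k)"

definition W_mat :: "nat \<Rightarrow> nat \<Rightarrow> (nat \<Rightarrow> nat \<Rightarrow> int) \<Rightarrow> complex mat" where
  "W_mat n d T = mat (n ^ d) (n ^ d) (\<lambda>(a, b).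
     cis (2 * pi / n) ^ nat ((\<Sum>k<d. \<Sum>l<d. int (digit n k a) * T k l * int (digit n l b)) mod int n))"

text \<open>Partial transpose over the coordinate set kappa (0-based coordinates):
  coordinates k in kappa of row and column multi-indices are exchanged.\<close>
definition ptrans :: "nat \<Rightarrow> nat \<Rightarrow> nat set \<Rightarrow> 'a mat \<Rightarrow> 'a mat" where
  "ptrans n d \<kappa> M = mat (dim_row M) (dim_col M) (\<lambda>(a, b).
     M $$ (tup_enc n d (\<lambda>k. if k \<in> \<kappa> then digit n k b else digit n k a),
           tup_enc n d (\<lambda>k. if k \<in> \<kappa> then digit n k a else digit n k b)))"

end

theory Submission
  imports Defs "HOL-Computational_Algebra.Polynomial"
begin


lemma poly_mod_roots:
  fixes p :: int and f :: "int poly"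
  assumes "prime p" "finite R" "inj_on (\<lambda>z. z mod p) R" "degree f < card R"
    "\<forall>r\<in>R. p dvd poly f r"
  shows "p dvd poly f z"
  using assms(2-5)
proof (induction R arbitrary: f rule: finite_induct)
  case empty
  then show ?case by simp
next
  case (insert r R)
  define g where "g = synthetic_div f r"
  have fg: "f = [:-r,1:] * g + [:poly f r:]" unfolding g_def
    by (rule synthetic_div_correct'[symmetric])
  have pr: "p dvd poly f r" using insert by simp
  show ?case
  proof (cases "degree f = 0")
    case True
    then obtain c where "f = [:c:]" by (metis degree_eq_zeroE)
    then show ?thesis using pr by simp
  next
    case False
    have dg: "degree g < card R" using False insert(1,2,5) unfolding g_def
      by (simp add: degree_synthetic_div)
    have "p dvd poly g s" if s: "s \<in> R" for s
    proof -
      have "poly f s = (s - r) * poly g s + poly f r"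
        by (subst fg) (simp add: algebra_simps)
      moreover have "p dvd poly f s" using insert s by simp
      ultimately have "p dvd (s - r) * poly g s" using pr
        by (metis add_diff_cancel_right' dvd_diff)
      moreover have "\<not> p dvd (s - r)"
      proof
        assume "p dvd (s - r)"
        then have "s mod p = r mod p" by (simp add: mod_eq_dvd_iff)
        then show False using insert(2,4) s by (auto simp: inj_on_def)
      qed
      ultimately show ?thesis using assms(1) by (simp add: prime_dvd_mult_iff)
    qed
    then have "p dvd poly g z" using insert(3)[of g] insert(4) dg
      by (simp add: inj_on_insert)
    then show ?thesis using pr by (subst fg) (simp)
  qed
qed

lemma cauchy_ker:
  fixes p :: int and x y u :: "nat \<Rightarrow> int" and C :: "nat \<Rightarrow> nat \<Rightarrow> int"
  assumes pp: "prime p" and fA: "finite A" and fB: "finite B" and cAB: "card A \<le> card B"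
    and ix: "inj_on (\<lambda>a. x a mod p) A" and iy: "inj_on (\<lambda>b. y b mod p) B"
    and hC: "\<forall>a\<in>A. \<forall>b\<in>B. p dvd (C a b * (x a - y b) - 1)"
    and hu: "\<forall>b\<in>B. p dvd (\<Sum>a\<in>A. u a * C a b)"
    and c: "c \<in> A"
  shows "p dvd u c"
proof -
  define P where "P = (\<Sum>a\<in>A. Polynomial.smult (u a) (\<Prod>a'\<in>A-{a}. [:x a', -1:]))"
  have polyP: "poly P z = (\<Sum>a\<in>A. u a * (\<Prod>a'\<in>A-{a}. x a' - z))" for z
    unfolding P_def by (simp add: poly_sum poly_prod)
  have "degree P \<le> card A - 1"
    unfolding P_def
  proof (rule degree_sum_le)
    fix a assume a: "a \<in> A"
    have "degree (\<Prod>a'\<in>A-{a}. [:x a', -1:]) \<le> (\<Sum>a'\<in>A-{a}. degree [:x a', -1:])"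
      by (rule order.trans[OF degree_prod_sum_le]) (use fA in \<open>simp_all add: o_def\<close>)
    also have "\<dots> = card A - 1" using a fA by simp
    finally show "degree (Polynomial.smult (u a) (\<Prod>a'\<in>A-{a}. [:x a', -1:])) \<le> card A - 1"
      by (meson degree_smult_le order.trans)
  qed (use fA in auto)
  moreover have "card A > 0" using c fA by (auto simp: card_gt_0_iff)
  ultimately have dP: "degree P < card B" using cAB by linarith
  have iyB: "inj_on y B" using iy by (auto simp: inj_on_def)
  have cR: "card (y ` B) = card B" using iyB by (simp add: card_image)
  have iR: "inj_on (\<lambda>z. z mod p) (y ` B)" using iy by (auto simp: inj_on_def)
  have roots: "\<forall>r\<in>y ` B. p dvd poly P r"
  proof
    fix r assume "r \<in> y ` B"
    then obtain b where b: "b \<in> B" "r = y b" by auto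
    define Q where "Q a = (\<Prod>a'\<in>A-{a}. x a' - y b)" for a
    have "p dvd (\<Sum>a\<in>A. u a * Q a * (C a b * (x a - y b) - 1))"
      using hC b by (intro dvd_sum) auto
    moreover have "(\<Sum>a\<in>A. u a * Q a * (C a b * (x a - y b))) = (\<Sum>a\<in>A. u a * C a b) * (\<Prod>a'\<in>A. x a' - y b)"
      unfolding sum_distrib_right
    proof (rule sum.cong[OF refl])
      fix a assume "a \<in> A"
      then have "(\<Prod>a'\<in>A. x a' - y b) = (x a - y b) * Q a"
        unfolding Q_def using fA by (simp add: prod.remove)
      then show "u a * Q a * (C a b * (x a - y b)) = u a * C a b * (\<Prod>a'\<in>A. x a' - y b)"
        by simp
    qed
    moreover have "p dvd (\<Sum>a\<in>A. u a * C a b) * (\<Prod>a'\<in>A. x a' - y b)"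
      using hu b by simp
    moreover have "(\<Sum>a\<in>A. u a * Q a * (C a b * (x a - y b) - 1)) =
       (\<Sum>a\<in>A. u a * Q a * (C a b * (x a - y b))) - (\<Sum>a\<in>A. u a * Q a)"
      by (simp only: right_diff_distrib mult_1_right sum_subtractf)
    ultimately have "p dvd (\<Sum>a\<in>A. u a * Q a * (C a b * (x a - y b))) - (\<Sum>a\<in>A. u a * Q a * (C a b * (x a - y b) - 1))"
      by (intro dvd_diff) simp_all
    also have "(\<Sum>a\<in>A. u a * Q a * (C a b * (x a - y b))) - (\<Sum>a\<in>A. u a * Q a * (C a b * (x a - y b) - 1)) = (\<Sum>a\<in>A. u a * Q a)"
      using \<open>(\<Sum>a\<in>A. u a * Q a * (C a b * (x a - y b) - 1)) = _\<close> by linarith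
    finally have "p dvd (\<Sum>a\<in>A. u a * Q a)" .
    then show "p dvd poly P r" using b polyP Q_def by simp
  qed
  have "p dvd poly P (x c)"
    by (rule poly_mod_roots[OF pp _ iR _ roots]) (use fB cR dP in auto)
  moreover have "poly P (x c) = u c * (\<Prod>a'\<in>A-{c}. x a' - x c)"
  proof -
    have "poly P (x c) = u c * (\<Prod>a'\<in>A-{c}. x a' - x c) + (\<Sum>a\<in>A-{c}. u a * (\<Prod>a'\<in>A-{a}. x a' - x c))"
      unfolding polyP using fA c by (simp add: sum.remove)
    moreover have "(\<Sum>a\<in>A-{c}. u a * (\<Prod>a'\<in>A-{a}. x a' - x c)) = 0"
      using fA c by (intro sum.neutral ballI) (auto simp: prod_zero_iff)
    ultimately show ?thesis by simp
  qed
  moreover have "\<not> p dvd (\<Prod>a'\<in>A-{c}. x a' - x c)"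
  proof
    assume "p dvd (\<Prod>a'\<in>A-{c}. x a' - x c)"
    then obtain a' where a': "a' \<in> A-{c}" "p dvd x a' - x c"
      using pp fA by (auto simp: prime_dvd_prod_iff)
    then have "x a' mod p = x c mod p" by (simp add: mod_eq_dvd_iff)
    then show False using ix a' c by (auto simp: inj_on_def)
  qed
  ultimately show ?thesis using pp by (simp add: prime_dvd_mult_iff)
qed



lemma digit_0: "digit n 0 a = a mod n" by (simp add: digit_def)
lemma digit_Suc: "digit n (Suc k) a = digit n k (a div n)"
  by (simp add: digit_def div_mult2_eq)
lemma digit_lt: "n > 0 \<Longrightarrow> digit n k a < n" by (simp add: digit_def)

lemma tup_enc_Suc: "tup_enc n (Suc d) f = f 0 + n * tup_enc n d (\<lambda>k. f (Suc k))"
  by (simp add: tup_enc_def sum.lessThan_Suc_shift sum_distrib_left algebra_simps del: sum.lessThan_Suc)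

lemma tup_enc_lt: "n > 0 \<Longrightarrow> (\<forall>k<d. f k < n) \<Longrightarrow> tup_enc n d f < n ^ d"
proof (induction d arbitrary: f)
  case 0 then show ?case by (simp add: tup_enc_def)
next
  case (Suc d)
  have t: "tup_enc n d (\<lambda>k. f (Suc k)) < n ^ d" using Suc by auto
  have f0: "f 0 < n" using Suc by auto
  have "f 0 + n * tup_enc n d (\<lambda>k. f (Suc k)) < n + n * tup_enc n d (\<lambda>k. f (Suc k))" using f0 by simp
  also have "\<dots> = n * (tup_enc n d (\<lambda>k. f (Suc k)) + 1)" by (simp add: algebra_simps)
  also have "\<dots> \<le> n * n ^ d" using t by (intro mult_left_mono) auto
  finally show ?case by (simp add: tup_enc_Suc)
qed

lemma digit_tup_enc: "n > 0 \<Longrightarrow> (\<forall>k<d. f k < n) \<Longrightarrow> k < d \<Longrightarrow> digit n k (tup_enc n d f) = f k"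
proof (induction d arbitrary: f k)
  case 0 then show ?case by simp
next
  case (Suc d)
  show ?case
  proof (cases k)
    case 0 then show ?thesis using Suc by (simp add: tup_enc_Suc digit_0)
  next
    case (Suc k')
    have "digit n k (tup_enc n (Suc d) f) = digit n k' (tup_enc n d (\<lambda>k. f (Suc k)))"
      using Suc.prems(1) Suc.prems(2) by (simp add: tup_enc_Suc digit_Suc Suc)
    also have "\<dots> = f k" using Suc.IH[of "\<lambda>k. f (Suc k)" k'] Suc.prems Suc by auto
    finally show ?thesis .
  qed
qed

lemma digits_eq: "n > 0 \<Longrightarrow> a < n ^ d \<Longrightarrow> b < n ^ d \<Longrightarrow> (\<forall>k<d. digit n k a = digit n k b) \<Longrightarrow> a = b"
proof (induction d arbitrary: a b)
  case 0 then show ?case by simp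
next
  case (Suc d)
  have "a mod n = b mod n" using Suc.prems(4)[rule_format, of 0] by (simp add: digit_0)
  moreover have "a div n = b div n"
  proof (rule Suc.IH)
    show "a div n < n ^ d" "b div n < n ^ d" using Suc.prems
      by (simp_all add: less_mult_imp_div_less mult.commute)
    show "\<forall>k<d. digit n k (a div n) = digit n k (b div n)"
      using Suc.prems(4) by (auto simp: digit_Suc[symmetric])
  qed (use Suc in auto)
  ultimately show ?case by (metis div_mod_decomp)
qed

lemma sum_split_nat: fixes m n :: nat shows "(\<Sum>b<m * n. h b) = (\<Sum>q<m. \<Sum>t<n. h (q * n + t))"
proof -
  have "(\<Sum>b<m * n. h b) = (\<Sum>q<m. \<Sum>b\<in>{q*n..<q*n+n}. h b)"
    by (simp only: sum.nat_group)
  also have "\<dots> = (\<Sum>q<m. \<Sum>t<n. h (q * n + t))"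
  proof (rule sum.cong[OF refl])
    fix q
    show "(\<Sum>b\<in>{q*n..<q*n+n}. h b) = (\<Sum>t<n. h (q * n + t))"
      by (rule sum.reindex_bij_witness[where j="\<lambda>b. b - q*n" and i="\<lambda>t. q*n+t"]) auto
  qed
  finally show ?thesis .
qed

lemma sum_digits_prod:
  fixes g :: "nat \<Rightarrow> nat \<Rightarrow> 'a::comm_semiring_1"
  assumes "n > 0"
  shows "(\<Sum>b<n^d. \<Prod>m<d. g m (digit n m b)) = (\<Prod>m<d. \<Sum>t<n. g m t)"
proof (induction d arbitrary: g)
  case 0 then show ?case by simp
next
  case (Suc d)
  have "(\<Sum>b<n^Suc d. \<Prod>m<Suc d. g m (digit n m b))
      = (\<Sum>b<n^d * n. g 0 (b mod n) * (\<Prod>m<d. g (Suc m) (digit n m (b div n))))"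
    by (simp add: prod.lessThan_Suc_shift digit_0 digit_Suc mult.commute del: prod.lessThan_Suc)
  also have "\<dots> = (\<Sum>q<n^d. \<Sum>t<n. g 0 t * (\<Prod>m<d. g (Suc m) (digit n m q)))"
    unfolding sum_split_nat using assms by (intro sum.cong refl) auto
  also have "\<dots> = (\<Sum>t<n. g 0 t) * (\<Sum>q<n^d. \<Prod>m<d. g (Suc m) (digit n m q))"
    by (simp add: sum_distrib_left sum_distrib_right mult.commute)
  also have "\<dots> = (\<Sum>t<n. g 0 t) * (\<Prod>m<d. \<Sum>t<n. g (Suc m) t)"
    using Suc.IH[of "\<lambda>m. g (Suc m)"] by simp
  also have "\<dots> = (\<Prod>m<Suc d. \<Sum>t<n. g m t)"
    by (simp add: prod.lessThan_Suc_shift del: prod.lessThan_Suc)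
  finally show ?case .
qed

definition ee :: "nat \<Rightarrow> int \<Rightarrow> complex" where
  "ee n z = cis (2 * pi * of_int z / real n)"

lemma ee_add: "ee n (a + b) = ee n a * ee n b"
  unfolding ee_def cis_mult by (simp add: distrib_left add_divide_distrib)

lemma ee_zero[simp]: "ee n 0 = 1" by (simp add: ee_def)

lemma ee_mult_n: "n > 0 \<Longrightarrow> ee n (int n * q) = 1"
proof -
  assume "n > 0"
  then have "2 * pi * of_int (int n * q) / real n = 2 * pi * of_int q" by simp
  then show ?thesis unfolding ee_def by simp
qed

lemma ee_mod: "n > 0 \<Longrightarrow> ee n (z mod int n) = ee n z"
proof -
  assume n: "n > 0"
  have "ee n z = ee n (z mod int n + int n * (z div int n))" by simp
  also have "\<dots> = ee n (z mod int n)" using n by (simp only: ee_add ee_mult_n) simp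
  finally show ?thesis by simp
qed

lemma ee_sum: "ee n (\<Sum>i\<in>A. f i) = (\<Prod>i\<in>A. ee n (f i))"
  by (induction A rule: infinite_finite_induct) (simp_all add: ee_add)

lemma ee_cnj: "cnj (ee n z) = ee n (- z)"
  unfolding ee_def cis_cnj by simp

lemma ee_cmod: "ee n z * cnj (ee n z) = 1"
  unfolding ee_cnj ee_add[symmetric] by simp

lemma ee_pow: "ee n c ^ t = ee n (c * int t)"
  unfolding ee_def DeMoivre by (simp add: algebra_simps)

lemma W_entry: "n > 0 \<Longrightarrow> cis (2 * pi / n) ^ nat (E mod int n) = ee n E"
proof -
  assume n: "n > 0"
  have "cis (2 * pi / n) ^ nat (E mod int n) = ee n (E mod int n)"
    unfolding DeMoivre ee_def using n by (simp add: algebra_simps)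
  then show ?thesis using ee_mod n by simp
qed

lemma ee_ne_1: assumes n: "n > 0" and nd: "\<not> int n dvd c" shows "ee n c \<noteq> 1"
proof
  assume h: "ee n c = 1"
  define r where "r = c mod int n"
  have r0: "0 \<le> r" "r < int n" using n by (simp_all add: r_def)
  have "r \<noteq> 0" using nd by (simp add: r_def dvd_eq_mod_eq_0)
  then have r: "0 < r" "r < int n" using r0 by simp_all
  have "ee n r = 1" using h ee_mod[OF n, of c] r_def by simp
  then have "cos (2 * pi * of_int r / real n) = 1" unfolding ee_def
    by (metis Re_complex_of_real complex_of_real_def one_complex.sel(1) cis.sel(1))
  then obtain k :: int where k: "2 * pi * of_int r / real n = of_int k * 2 * pi"
    by (auto simp: cos_one_2pi_int)
  then have "of_int r = of_int k * real n" using n by (simp add: field_simps)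
  then have "r = k * int n" by (metis of_int_eq_iff of_int_mult of_int_of_nat_eq)
  then show False using r
    by (metis mult_less_cancel_right2 mult_pos_pos not_le of_nat_0_less_iff zero_less_mult_pos2 less_le_trans mult_le_cancel_right1 linorder_not_less zmult_zless_mono2 mult_cancel_right1 order.strict_iff_not int_one_le_iff_zero_less)
qed

lemma ee_geom: assumes n: "n > 0"
  shows "(\<Sum>t<n. ee n (c * int t)) = (if int n dvd c then of_nat n else 0)"
proof (cases "int n dvd c")
  case True
  then obtain q where "c = int n * q" by auto
  then have "ee n (c * int t) = 1" for t using ee_mult_n[OF n, of "q * int t"] by (simp add: algebra_simps)
  then show ?thesis using True by simp
next
  case False
  have "(\<Sum>t<n. ee n (c * int t)) = (\<Sum>t<n. ee n c ^ t)" by (simp add: ee_pow)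
  also have "\<dots> = 0" using ee_ne_1[OF n False] ee_pow[of n c n] ee_mult_n[OF n, of c]
    by (simp add: sum_gp_strict mult.commute)
  finally show ?thesis using False by simp
qed



lemma M_entry:
  assumes n: "n > 0" and ab: "a < n ^ d" "b < n ^ d"
  shows "ptrans n d \<kappa> (W_mat n d T) $$ (a, b) = ee n (\<Sum>k<d. \<Sum>l<d.
     int (if k \<in> \<kappa> then digit n k b else digit n k a) * T k l *
     int (if l \<in> \<kappa> then digit n l a else digit n l b))"
proof -
  define f where "f k = (if k \<in> \<kappa> then digit n k b else digit n k a)" for k
  define g where "g k = (if k \<in> \<kappa> then digit n k a else digit n k b)" for k
  have fb: "\<forall>k<d. f k < n" "\<forall>k<d. g k < n" using n by (auto simp: f_def g_def digit_lt)
  have r: "tup_enc n d f < n ^ d" and s: "tup_enc n d g < n ^ d"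
    using tup_enc_lt[OF n] fb by auto
  have "ptrans n d \<kappa> (W_mat n d T) $$ (a, b) = W_mat n d T $$ (tup_enc n d f, tup_enc n d g)"
    using ab unfolding f_def g_def by (simp add: ptrans_def W_mat_def)
  also have "\<dots> = cis (2 * pi / n) ^ nat ((\<Sum>k<d. \<Sum>l<d. int (digit n k (tup_enc n d f)) * T k l
        * int (digit n l (tup_enc n d g))) mod int n)"
    using r s by (simp add: W_mat_def)
  also have "\<dots> = ee n (\<Sum>k<d. \<Sum>l<d. int (digit n k (tup_enc n d f)) * T k l
        * int (digit n l (tup_enc n d g)))" by (rule W_entry[OF n])
  also have "(\<Sum>k<d. \<Sum>l<d. int (digit n k (tup_enc n d f)) * T k l
        * int (digit n l (tup_enc n d g))) = (\<Sum>k<d. \<Sum>l<d. int (f k) * T k l * int (g l))"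
    using digit_tup_enc[OF n fb(1)] digit_tup_enc[OF n fb(2)] by (intro sum.cong refl) auto
  finally show ?thesis unfolding f_def g_def .
qed

lemma E_diff:
  fixes A B A' :: "nat \<Rightarrow> int"
  shows "(\<Sum>k<d. \<Sum>l<d. (if k \<in> \<kappa> then B k else A k) * T k l * (if l \<in> \<kappa> then A l else B l))
       - (\<Sum>k<d. \<Sum>l<d. (if k \<in> \<kappa> then B k else A' k) * T k l * (if l \<in> \<kappa> then A' l else B l))
     = (\<Sum>k<d. \<Sum>l<d. (if k \<notin> \<kappa> \<and> l \<in> \<kappa> then A k * T k l * A l - A' k * T k l * A' l else 0))
       + (\<Sum>m<d. (if m \<in> \<kappa> then (\<Sum>l<d. if l \<in> \<kappa> then T m l * (A l - A' l) else 0)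
                   else (\<Sum>k<d. if k \<in> \<kappa> then 0 else (A k - A' k) * T k m)) * B m)"
proof -
  define X0 where "X0 k l = (if k \<notin> \<kappa> \<and> l \<in> \<kappa> then A k * T k l * A l - A' k * T k l * A' l else 0)" for k l
  define Y where "Y k l = (if l \<in> \<kappa> then T k l * (A l - A' l) else 0)" for k l
  define Z where "Z k l = (if k \<in> \<kappa> then 0 else (A k - A' k) * T k l)" for k l
  define X1 where "X1 k l = (if k \<in> \<kappa> then B k * Y k l else 0)" for k l
  define X3 where "X3 k l = (if l \<in> \<kappa> then 0 else Z k l * B l)" for k l
  have hterm: "(if k \<in> \<kappa> then B k else A k) * T k l * (if l \<in> \<kappa> then A l else B l)
     - (if k \<in> \<kappa> then B k else A' k) * T k l * (if l \<in> \<kappa> then A' l else B l)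
     = X0 k l + X1 k l + X3 k l" for k l
    unfolding X0_def X1_def X3_def Y_def Z_def by (cases "k \<in> \<kappa>"; cases "l \<in> \<kappa>") (simp_all add: algebra_simps)
  have PQ: "(\<Sum>m<d. if m \<in> \<kappa> then B m * (\<Sum>l<d. Y m l) else 0) + (\<Sum>m<d. if m \<in> \<kappa> then 0 else (\<Sum>k<d. Z k m) * B m)
     = (\<Sum>m<d. (if m \<in> \<kappa> then (\<Sum>l<d. Y m l) else (\<Sum>k<d. Z k m)) * B m)"
    unfolding sum.distrib[symmetric] by (intro sum.cong refl) auto
  have "(\<Sum>k<d. \<Sum>l<d. (if k \<in> \<kappa> then B k else A k) * T k l * (if l \<in> \<kappa> then A l else B l))
       - (\<Sum>k<d. \<Sum>l<d. (if k \<in> \<kappa> then B k else A' k) * T k l * (if l \<in> \<kappa> then A' l else B l))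
     = (\<Sum>k<d. \<Sum>l<d. X0 k l + X1 k l + X3 k l)"
    by (simp only: sum_subtractf[symmetric] hterm)
  also have "\<dots> = (\<Sum>k<d. \<Sum>l<d. X0 k l) + (\<Sum>k<d. \<Sum>l<d. X1 k l) + (\<Sum>k<d. \<Sum>l<d. X3 k l)"
    by (simp only: sum.distrib)
  also have "(\<Sum>k<d. \<Sum>l<d. X1 k l) = (\<Sum>m<d. if m \<in> \<kappa> then B m * (\<Sum>l<d. Y m l) else 0)"
    unfolding X1_def by (intro sum.cong refl) (simp add: sum_distrib_left)
  also have "(\<Sum>k<d. \<Sum>l<d. X3 k l) = (\<Sum>l<d. \<Sum>k<d. X3 k l)"
    by (rule sum.swap)
  also have "\<dots> = (\<Sum>m<d. if m \<in> \<kappa> then 0 else (\<Sum>k<d. Z k m) * B m)"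
    unfolding X3_def by (intro sum.cong refl) (simp add: sum_distrib_right)
  also have "(\<Sum>k<d. \<Sum>l<d. X0 k l) + (\<Sum>m<d. if m \<in> \<kappa> then B m * (\<Sum>l<d. Y m l) else 0) + (\<Sum>m<d. if m \<in> \<kappa> then 0 else (\<Sum>k<d. Z k m) * B m)
     = (\<Sum>k<d. \<Sum>l<d. X0 k l) + (\<Sum>m<d. (if m \<in> \<kappa> then (\<Sum>l<d. Y m l) else (\<Sum>k<d. Z k m)) * B m)"
    by (simp only: add.assoc PQ)
  finally show ?thesis unfolding X0_def Y_def Z_def .
qed



lemma inj_mod_sub:
  assumes "\<forall>a<d. x a \<in> {0..<int n}" "inj_on x {0..<d}" "S \<subseteq> {0..<d}"
  shows "inj_on (\<lambda>a. x a mod int n) S"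
proof -
  have "x a mod int n = x a" if "a \<in> S" for a using assms(1,3) that by auto
  then show ?thesis using assms(2,3) by (auto simp: inj_on_def subset_iff)
qed

lemma exists_nondiv:
  fixes n d :: nat and T :: "nat \<Rightarrow> nat \<Rightarrow> int" and \<kappa> :: "nat set" and x y v :: "nat \<Rightarrow> int"
  assumes pn: "prime (int n)" and ks: "\<kappa> \<subseteq> {0..<d}"
    and xr: "\<forall>a<d. x a \<in> {0..<int n} \<and> y a \<in> {0..<int n}"
    and ix: "inj_on x {0..<d}" and iy: "inj_on y {0..<d}"
    and hT: "\<forall>a<d. \<forall>b<d. (T a b * (x a - y b)) mod int n = 1 mod int n"
    and hc: "\<forall>m<d. int n dvd (if m \<in> \<kappa> then (\<Sum>l<d. if l \<in> \<kappa> then T m l * v l else 0)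
                   else (\<Sum>k<d. if k \<in> \<kappa> then 0 else v k * T k m))"
    and k: "k < d"
  shows "int n dvd v k"
proof -
  have fk: "finite \<kappa>" using ks finite_subset by blast
  have xr1: "\<forall>a<d. x a \<in> {0..<int n}" and yr1: "\<forall>a<d. y a \<in> {0..<int n}" using xr by auto
  have hT': "int n dvd (T a b * (x a - y b) - 1)" if "a < d" "b < d" for a b
    using hT that by (simp add: mod_eq_dvd_iff)
  show ?thesis
  proof (cases "k \<in> \<kappa>")
    case True
    show ?thesis
    proof (rule cauchy_ker[OF pn fk fk le_refl, where x=y and y=x and C="\<lambda>l m. - T m l" and u=v])
      show "inj_on (\<lambda>a. y a mod int n) \<kappa>" by (rule inj_mod_sub[OF yr1 iy ks])
      show "inj_on (\<lambda>a. x a mod int n) \<kappa>" by (rule inj_mod_sub[OF xr1 ix ks])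
      show "\<forall>a\<in>\<kappa>. \<forall>b\<in>\<kappa>. int n dvd (- T b a * (y a - x b) - 1)"
      proof (intro ballI)
        fix a b assume ab: "a \<in> \<kappa>" "b \<in> \<kappa>"
        then have "a < d" "b < d" using ks by auto
        then have "int n dvd (T b a * (x b - y a) - 1)" by (intro hT')
        moreover have "- T b a * (y a - x b) = T b a * (x b - y a)" by (simp add: algebra_simps)
        ultimately show "int n dvd (- T b a * (y a - x b) - 1)" by simp
      qed
      show "\<forall>b\<in>\<kappa>. int n dvd (\<Sum>a\<in>\<kappa>. v a * - T b a)"
      proof
        fix m assume m: "m \<in> \<kappa>"
        have md: "m < d" using m ks by auto
        have "int n dvd (if m \<in> \<kappa> then (\<Sum>l<d. if l \<in> \<kappa> then T m l * v l else 0)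
                   else (\<Sum>k<d. if k \<in> \<kappa> then 0 else v k * T k m))" using hc md by blast
        then have "int n dvd (\<Sum>l<d. if l \<in> \<kappa> then T m l * v l else 0)" using m by simp
        also have "(\<Sum>l<d. if l \<in> \<kappa> then T m l * v l else 0) = sum (\<lambda>l. T m l * v l) ({..<d} \<inter> \<kappa>)"
          by (rule sum.inter_restrict[symmetric]) simp
        also have "{..<d} \<inter> \<kappa> = \<kappa>" using ks by auto
        finally have "int n dvd - (\<Sum>l\<in>\<kappa>. T m l * v l)" by simp
        also have "- (\<Sum>l\<in>\<kappa>. T m l * v l) = (\<Sum>a\<in>\<kappa>. v a * - T m a)"
          by (simp add: sum_negf[symmetric] algebra_simps)
        finally show "int n dvd (\<Sum>a\<in>\<kappa>. v a * - T m a)" .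
      qed
    qed (rule True)
  next
    case False
    define L where "L = {0..<d} - \<kappa>"
    have fL: "finite L" and Ls: "L \<subseteq> {0..<d}" by (auto simp: L_def)
    show ?thesis
    proof (rule cauchy_ker[OF pn fL fL le_refl, where x=x and y=y and C=T and u=v])
      show "inj_on (\<lambda>a. x a mod int n) L" by (rule inj_mod_sub[OF xr1 ix Ls])
      show "inj_on (\<lambda>a. y a mod int n) L" by (rule inj_mod_sub[OF yr1 iy Ls])
      show "\<forall>a\<in>L. \<forall>b\<in>L. int n dvd (T a b * (x a - y b) - 1)" using hT' Ls by (meson atLeastLessThan_iff subsetD)
      show "\<forall>b\<in>L. int n dvd (\<Sum>a\<in>L. v a * T a b)"
      proof
        fix m assume m: "m \<in> L"
        have md: "m < d" "m \<notin> \<kappa>" using m by (auto simp: L_def)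
        have "int n dvd (if m \<in> \<kappa> then (\<Sum>l<d. if l \<in> \<kappa> then T m l * v l else 0)
                   else (\<Sum>k<d. if k \<in> \<kappa> then 0 else v k * T k m))" using hc md by blast
        then have "int n dvd (\<Sum>k<d. if k \<in> \<kappa> then 0 else v k * T k m)" using md by simp
        also have "(\<Sum>k<d. if k \<in> \<kappa> then 0 else v k * T k m) = (\<Sum>k<d. if k \<in> L then v k * T k m else 0)"
          by (intro sum.cong refl) (auto simp: L_def)
        also have "\<dots> = sum (\<lambda>k. v k * T k m) ({..<d} \<inter> L)"
          by (rule sum.inter_restrict[symmetric]) simp
        also have "{..<d} \<inter> L = L" using Ls by auto
        finally show "int n dvd (\<Sum>a\<in>L. v a * T a m)" .
      qed
      show "k \<in> L" using False k by (auto simp: L_def)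
    qed
  qed
qed



theorem proposition6p8:
  fixes n d :: nat and T :: "nat \<Rightarrow> nat \<Rightarrow> int" and \<kappa> :: "nat set"
  assumes "even d" and "prime n" and "n > 2 * d"
    and "cauchy_mod n d T"
    and "\<kappa> \<subseteq> {0..<d}"
  shows "vec_space.rank (n ^ d) (ptrans n d \<kappa> (W_mat n d T)) = n ^ d"
proof -
  have n0: "n > 0" using assms(2) prime_gt_0_nat by blast
  have pn: "prime (int n)" using assms(2) by simp
  have ks: "\<kappa> \<subseteq> {0..<d}" by (rule assms(5))
  obtain x y :: "nat \<Rightarrow> int" where
    xr: "\<forall>a<d. x a \<in> {0..<int n} \<and> y a \<in> {0..<int n}" and
    ix: "inj_on x {0..<d}" and iy: "inj_on y {0..<d}" and
    hT: "\<forall>a<d. \<forall>b<d. (T a b * (x a - y b)) mod int n = 1 mod int n"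
    using assms(4) unfolding cauchy_mod_def by blast
  define N where "N = n ^ d"
  define M where "M = ptrans n d \<kappa> (W_mat n d T)"
  have Mc: "M \<in> carrier_mat N N" by (simp add: M_def ptrans_def W_mat_def N_def)
  define E where "E a b = (\<Sum>k<d. \<Sum>l<d. (if k \<in> \<kappa> then int (digit n k b) else int (digit n k a)) * T k l
        * (if l \<in> \<kappa> then int (digit n l a) else int (digit n l b)))" for a b
  have Mab: "M $$ (a, b) = ee n (E a b)" if "a < N" "b < N" for a b
    using M_entry[OF n0, of a d b \<kappa> T] that unfolding M_def E_def N_def
    by (simp add: if_distrib[of int])
  have key: "(\<Sum>b<N. ee n (E a b - E a' b)) = (if a = a' then of_nat N else 0)"
    if aa: "a < N" "a' < N" for a a'
  proof (cases "a = a'")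
    case True then show ?thesis by simp
  next
    case False
    define A where "A k = int (digit n k a)" for k
    define A' where "A' k = int (digit n k a')" for k
    define c where "c m = (if m \<in> \<kappa> then (\<Sum>l<d. if l \<in> \<kappa> then T m l * (A l - A' l) else 0)
                   else (\<Sum>k<d. if k \<in> \<kappa> then 0 else (A k - A' k) * T k m))" for m
    define A0 where "A0 = (\<Sum>k<d. \<Sum>l<d. (if k \<notin> \<kappa> \<and> l \<in> \<kappa> then A k * T k l * A l - A' k * T k l * A' l else 0))"
    have Ed: "E a b - E a' b = A0 + (\<Sum>m<d. c m * int (digit n m b))" for b
      unfolding E_def A0_def c_def A_def A'_def
      by (rule E_diff[where B="\<lambda>k. int (digit n k b)"])
    have "(\<Sum>b<N. ee n (E a b - E a' b)) = (\<Sum>b<N. ee n A0 * (\<Prod>m<d. ee n (c m * int (digit n m b))))"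
      unfolding Ed ee_add ee_sum ..
    also have "\<dots> = ee n A0 * (\<Sum>b<n^d. \<Prod>m<d. ee n (c m * int (digit n m b)))"
      by (simp add: sum_distrib_left N_def)
    also have "(\<Sum>b<n^d. \<Prod>m<d. ee n (c m * int (digit n m b))) = (\<Prod>m<d. \<Sum>t<n. ee n (c m * int t))"
      by (rule sum_digits_prod[OF n0, where g="\<lambda>m t. ee n (c m * int t)"])
    also have "\<dots> = (\<Prod>m<d. if int n dvd c m then of_nat n else 0)"
      by (simp add: ee_geom[OF n0])
    also have "\<dots> = 0"
    proof -
      have "\<exists>m<d. \<not> int n dvd c m"
      proof (rule ccontr)
        assume "\<not> (\<exists>m<d. \<not> int n dvd c m)"
        then have hc: "\<forall>m<d. int n dvd c m" by blast
        have "int n dvd (A k - A' k)" if k: "k < d" for k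
          by (rule exists_nondiv[OF pn ks xr ix iy hT _ k, where v="\<lambda>k. A k - A' k"])
             (use hc in \<open>simp add: c_def\<close>)
        then have "digit n k a = digit n k a'" if k: "k < d" for k
        proof -
          have "A k mod int n = A' k mod int n" using k \<open>\<And>k. k < d \<Longrightarrow> int n dvd (A k - A' k)\<close>
            by (simp add: mod_eq_dvd_iff)
          moreover have "A k mod int n = A k" "A' k mod int n = A' k"
            using digit_lt[OF n0] unfolding A_def A'_def by auto
          ultimately show ?thesis unfolding A_def A'_def by simp
        qed
        then have "a = a'" using digits_eq[OF n0, of a d a'] aa unfolding N_def by blast
        then show False using False by simp
      qed
      then show ?thesis by (auto simp: prod_zero_iff)
    qed
    finally show ?thesis using False by simp
  qed
  define C where "C = mat N N (\<lambda>(i, j). cnj (M $$ (j, i)))"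
  have Cc: "C \<in> carrier_mat N N" by (simp add: C_def)
  have MC: "M * C = of_nat N \<cdot>\<^sub>m 1\<^sub>m N"
  proof (rule eq_matI)
    fix i j assume ij: "i < dim_row (of_nat N \<cdot>\<^sub>m 1\<^sub>m N :: complex mat)" "j < dim_col (of_nat N \<cdot>\<^sub>m 1\<^sub>m N :: complex mat)"
    then have i: "i < N" and j: "j < N" by auto
    have "(M * C) $$ (i, j) = (\<Sum>b\<in>{0..<N}. M $$ (i, b) * C $$ (b, j))"
      using Mc Cc i j by (simp add: scalar_prod_def)
    also have "\<dots> = (\<Sum>b<N. ee n (E i b - E j b))"
      using i j by (intro sum.cong) (auto simp: C_def Mab ee_cnj ee_add[symmetric])
    also have "\<dots> = (of_nat N \<cdot>\<^sub>m 1\<^sub>m N) $$ (i, j)"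
      using key[OF i j] i j by simp
    finally show "(M * C) $$ (i, j) = (of_nat N \<cdot>\<^sub>m 1\<^sub>m N) $$ (i, j)" .
  qed (use Mc Cc in auto)
  have "det M * det C = det (of_nat N \<cdot>\<^sub>m 1\<^sub>m N :: complex mat)"
    using det_mult[OF Mc Cc] MC by simp
  also have "\<dots> = of_nat N ^ N" by simp
  also have "\<dots> \<noteq> 0" using n0 by (simp add: N_def)
  finally have "det M \<noteq> 0" by auto
  then have "vec_space.rank N M = N" using vec_space.det_rank_iff[OF Mc] by blast
  then show ?thesis unfolding M_def N_def .
qed


end
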